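(* Let $K$ be a field of characteristic zero, $m\in K[x,y]$ irreducible over $K(x)$ with $n=\deg_y(m)$, and $A=K(x)[y]/\langle m\rangle$ equipped with the derivation $'$ extending $d/dx$. Let $W=(\omega_1,\dots,\omega_n)$ be a $K(x)$-vector space basis of $A$, and let $e\in K[x]$ and $M=(m_{i,j})\in K[x]^{n\times n}$ be such that $eW'=MW$ and $\gcd(e,m_{1,1},m_{1,2},\dots,m_{n,n})=1$. Let $a\in\bar K$. If there exists $\omega\in W$ such that $a$ is a branch point of $\omega$, then $a$ is a root of $e$.
   Context: $\bar K$ is the algebraic closure of $K$. For $a\in\bar K$, $\bar K\langle\langle x-a\rangle\rangle=\bigcup_{r\ge1}\bar K((\,(x-a)^{1/r}))$ is the field of formal Puiseux series at $a$; $m$ has $n$ distinct roots $y_1,\dots,y_n$ there, giving $n$ $K(x)$-embeddings $\sigma_i:A\to\bar K\langle\langle x-a\rangle\rangle$, $\sigma_i(f(y))=f(y_i)$, which commute with differentiation. The ramification index of a series $P$ is the least $r\ge1$ with $P\in\bar K((\,(x-a)^{1/r}))$; $P$ is ramified if this index exceeds $1$. A point $a\in\bar K$ is a branch point of $f\in A$ if some $\sigma_i(f)$ (series at $a$) is ramified. *)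

theory Defs
  imports "HOL-Computational_Algebra.Computational_Algebra"
          "HOL-Algebra.Algebraic_Closure_Type"
begin

text \<open>K(x) is the fraction field 'k poly fract.
  A bivariate polynomial m in K[x,y] is a 'k poly poly (outer variable y, coefficients in K[x]).
  Elements of A = K(x)[y]/<m> are represented by polynomials in K(x)[y], i.e. of type
  'k poly fract poly; two representatives denote the same element of A iff m divides their
  difference.  The algebraic closure of K is the type 'k alg_closure with embedding to_ac.\<close>

definition mK :: "'k::field poly poly \<Rightarrow> 'k poly fract poly" where
  "mK m = map_poly to_fract m"

text \<open>Some representation g = p/q with q nonzero (results below do not depend on the choice).\<close>
definition rep :: "'k::field poly fract \<Rightarrow> 'k poly \<times> 'k poly" where
  "rep g = (SOME pq. snd pq \<noteq> 0 \<and> g = Fract (fst pq) (snd pq))"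

definition fderiv :: "'k::field poly fract \<Rightarrow> 'k poly fract" where
  "fderiv g = (case rep g of (p, q) \<Rightarrow>
      Fract (pderiv p * q - p * pderiv q) (q ^ 2))"

text \<open>Derivative of y in A: the class of a polynomial yd with m_y * yd + m_x = 0 in A.\<close>
definition ydash :: "'k::field poly poly \<Rightarrow> 'k poly fract poly" where
  "ydash m = (SOME yd. mK m dvd (pderiv (mK m) * yd + map_poly fderiv (mK m)))"

definition Aderiv :: "'k::field poly poly \<Rightarrow> 'k poly fract poly \<Rightarrow> 'k poly fract poly" where
  "Aderiv m f = (map_poly fderiv f + pderiv f * ydash m) mod mK m"

definition is_A_basis :: "'k::field poly poly \<Rightarrow> nat \<Rightarrow> (nat \<Rightarrow> 'k poly fract poly) \<Rightarrow> bool" where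
  "is_A_basis m n W \<longleftrightarrow>
     (\<forall>c. mK m dvd (\<Sum>i<n. smult (c i) (W i)) \<longrightarrow> (\<forall>i<n. c i = 0)) \<and>
     (\<forall>f. \<exists>c. mK m dvd (f - (\<Sum>i<n. smult (c i) (W i))))"

text \<open>Puiseux series at a are represented concretely: a series in
  Kbar((( x - a)^(1/r))) is a Laurent series in t = (x - a)^(1/r), i.e. an element of
  'k alg_closure fls in which x is substituted by a + t^r.\<close>
definition ser_at :: "'k::field alg_closure \<Rightarrow> nat \<Rightarrow> 'k poly fract \<Rightarrow> 'k alg_closure fls" where
  "ser_at a r g = (case rep g of (p, q) \<Rightarrow>
      poly (map_poly (fls_const \<circ> to_ac) p) (fls_const a + fls_X ^ r) /
      poly (map_poly (fls_const \<circ> to_ac) q) (fls_const a + fls_X ^ r))"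

text \<open>a is a branch point of f in A: for some root y_i of m in the Puiseux series field at a
  (realised, for some r >= 1, as a root Y in Kbar((t)), t^r = x - a), the series
  sigma_i(f) = f(y_i) is ramified, i.e. does not lie in Kbar((x - a)):
  it has a nonzero coefficient at a power t^k with r not dividing k.\<close>
definition branch_point :: "'k::field poly poly \<Rightarrow> 'k poly fract poly \<Rightarrow> 'k alg_closure \<Rightarrow> bool" where
  "branch_point m f a \<longleftrightarrow>
     (\<exists>r::nat. r \<ge> 1 \<and> (\<exists>Y. poly (map_poly (ser_at a r) (mK m)) Y = 0 \<and>
        (\<exists>k::int. fls_nth (poly (map_poly (ser_at a r) f) Y) k \<noteq> 0 \<and> \<not> (int r dvd k))))"

end

theory Submission
  imports Defs
begin

notation fls_nth (infixl "$$" 75)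

definition Rp :: "nat \<Rightarrow> 'b::field fls \<Rightarrow> bool" where
  "Rp r s \<longleftrightarrow> (\<forall>k. s $$ k \<noteq> 0 \<longrightarrow> 0 \<le> k \<and> int r dvd k)"
definition lb :: "'b::field fls \<Rightarrow> int \<Rightarrow> bool" where
  "lb h v \<longleftrightarrow> (\<forall>k<v. h $$ k = 0)"
definition Nm :: "nat \<Rightarrow> 'b::field fls \<Rightarrow> bool" where
  "Nm r h \<longleftrightarrow> (\<forall>k. int r dvd k \<longrightarrow> h $$ k = 0)"
definition Qm :: "nat \<Rightarrow> 'b::field fls \<Rightarrow> bool" where
  "Qm r h \<longleftrightarrow> (\<forall>k. \<not> int r dvd k \<longrightarrow> h $$ k = 0)"

lemma Rp_subdeg: "Rp r s \<Longrightarrow> s \<noteq> 0 \<Longrightarrow> 0 \<le> fls_subdegree s"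
  unfolding Rp_def using nth_fls_subdegree_nonzero by blast

lemma lb_subdeg: "lb h v \<Longrightarrow> h \<noteq> 0 \<Longrightarrow> v \<le> fls_subdegree h"
  unfolding lb_def using nth_fls_subdegree_nonzero by (meson not_le)

lemma lb_mult:
  assumes "Rp r s" "lb h v" shows "lb (s * h) v"
  unfolding lb_def
proof (intro allI impI)
  fix k assume k: "k < v"
  show "(s * h) $$ k = 0"
  proof (cases "s = 0 \<or> h = 0")
    case True then show ?thesis by auto
  next
    case False
    then have "0 \<le> fls_subdegree s" "v \<le> fls_subdegree h"
      using Rp_subdeg lb_subdeg assms by auto
    then show ?thesis using k by (intro fls_times_nth_eq0) simp
  qed
qed

lemma nth_mult_lb:
  assumes "Rp r s" "lb h v" shows "(s * h) $$ v = s $$ 0 * h $$ v"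
proof (cases "s = 0 \<or> h = 0")
  case True then show ?thesis by auto
next
  case False
  define df where "df = fls_subdegree s"
  define dg where "dg = fls_subdegree h"
  have d: "0 \<le> df" "v \<le> dg"
    using Rp_subdeg lb_subdeg assms False df_def dg_def by auto
  have eq: "(s * h) $$ v = (\<Sum>i=df..v - dg. s $$ i * h $$ (v - i))"
    using fls_times_nth(2) df_def dg_def by blast
  show ?thesis
  proof (cases "df = 0 \<and> dg = v")
    case True
    then show ?thesis using eq by simp
  next
    case F: False
    have "(\<Sum>i=df..v - dg. s $$ i * h $$ (v - i)) = 0"
      using F d by (intro sum.neutral) auto
    moreover have "s $$ 0 * h $$ v = 0"
    proof (cases "df = 0")
      case True then have "dg > v" using F d by auto
      then show ?thesis using dg_def by simp
    next
      case False then have "df > 0" using d by auto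
      then show ?thesis using df_def by simp
    qed
    ultimately show ?thesis using eq by simp
  qed
qed

lemma Nm_mult:
  assumes "Rp r s" "Nm r h" shows "Nm r (s * h)"
  unfolding Nm_def
proof (intro allI impI)
  fix k assume k: "int r dvd k"
  have "(s * h) $$ k = (\<Sum>i=fls_subdegree s..k - fls_subdegree h. s $$ i * h $$ (k - i))"
    using fls_times_nth(2) by blast
  also have "\<dots> = 0"
  proof (intro sum.neutral ballI)
    fix i show "s $$ i * h $$ (k - i) = 0"
    proof (cases "s $$ i = 0")
      case False
      then have "int r dvd i" using assms(1) unfolding Rp_def by blast
      then have "int r dvd (k - i)" using k by simp
      then show ?thesis using assms(2) unfolding Nm_def by simp
    qed simp
  qed
  finally show "(s * h) $$ k = 0" .
qed

lemma Qm_mult: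
  assumes "Rp r s" "Qm r h" shows "Qm r (s * h)"
  unfolding Qm_def
proof (intro allI impI)
  fix k assume k: "\<not> int r dvd k"
  have "(s * h) $$ k = (\<Sum>i=fls_subdegree s..k - fls_subdegree h. s $$ i * h $$ (k - i))"
    using fls_times_nth(2) by blast
  also have "\<dots> = 0"
  proof (intro sum.neutral ballI)
    fix i show "s $$ i * h $$ (k - i) = 0"
    proof (cases "s $$ i = 0")
      case False
      then have "int r dvd i" using assms(1) unfolding Rp_def by blast
      then have "\<not> int r dvd (k - i)" using k
        by (metis diff_add_cancel dvd_add)
      then show ?thesis using assms(2) unfolding Qm_def by simp
    qed simp
  qed
  finally show "(s * h) $$ k = 0" .
qed

definition proj :: "nat \<Rightarrow> 'b::field fls \<Rightarrow> 'b fls" where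
  "proj r h = Abs_fls (\<lambda>k. if int r dvd k then 0 else h $$ k)"

lemma proj_nth: "proj r h $$ k = (if int r dvd k then 0 else h $$ k)"
proof -
  have "\<forall>n<fls_subdegree h. (if int r dvd n then 0 else h $$ n) = 0" by simp
  then show ?thesis unfolding proj_def by (rule nth_Abs_fls_lower_bound)
qed

lemma Nm_proj: "Nm r (proj r h)" unfolding Nm_def by (simp add: proj_nth)
lemma Qm_diff_proj: "Qm r (h - proj r h)" unfolding Qm_def by (simp add: proj_nth)

lemma proj_add: "proj r (f + g) = proj r f + proj r g"
  by (simp add: fls_eq_iff proj_nth)

lemma proj_sum: "proj r (\<Sum>j<(n::nat). F j) = (\<Sum>j<n. proj r (F j))"
  by (induction n) (simp_all add: proj_add fls_eq_iff proj_nth)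
lemma proj_mult:
  assumes "Rp r s" shows "proj r (s * h) = s * proj r h"
proof -
  define A where "A = s * proj r h"
  define B where "B = s * (h - proj r h)"
  have e: "s * h = A + B" unfolding A_def B_def by (simp add: algebra_simps)
  have NA: "Nm r A" unfolding A_def using Nm_mult[OF assms Nm_proj] .
  have QB: "Qm r B" unfolding B_def using Qm_mult[OF assms Qm_diff_proj] .
  show ?thesis unfolding fls_eq_iff e A_def[symmetric]
  proof
    fix k
    have "proj r (A + B) $$ k = (if int r dvd k then 0 else A $$ k + B $$ k)"
      by (simp only: proj_nth fls_plus_nth)
    then show "proj r (A + B) $$ k = A $$ k"
      using NA QB unfolding Nm_def Qm_def by (cases "int r dvd k") auto
  qed
qed

definition theta :: "'b::field fls \<Rightarrow> 'b fls" where
  "theta h = fls_X * fls_deriv h"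

lemma X_times_nth: "(fls_X * (h::'b::field fls)) $$ k = h $$ (k - 1)"
  using fls_X_power_times_conv_shift(1)[of 1 h] by simp

lemma theta_nth: "theta h $$ k = of_int k * h $$ k"
  by (simp add: theta_def X_times_nth)

lemma proj_theta: "proj r (theta h) = theta (proj r h)"
  by (simp add: fls_eq_iff proj_nth theta_nth)

lemma lb_sum: "(\<And>j. j < (n::nat) \<Longrightarrow> lb (F j) v) \<Longrightarrow> lb (\<Sum>j<n. F j) v"
  unfolding lb_def by (simp add: fls_nth_sum)

lemma final_contra:
  fixes w :: "nat \<Rightarrow> 'b::field fls" and c :: "nat \<Rightarrow> nat \<Rightarrow> 'b fls"
  assumes char0: "\<And>v::int. v \<noteq> 0 \<Longrightarrow> (of_int v :: 'b) \<noteq> 0"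
    and s: "Rp r s" "s $$ 0 \<noteq> 0"
    and c: "\<And>i j. Rp r (c i j)"
    and q: "Rp r q" "q $$ 0 = 0"
    and eq: "\<And>i. i < n \<Longrightarrow> s * theta (w i) = q * (\<Sum>j<n. c i j * w j)"
    and i0: "i0 < n" "w i0 $$ k \<noteq> 0" "\<not> int r dvd k"
  shows False
proof -
  define u where "u i = proj r (w i)" for i
  have equ: "s * theta (u i) = q * (\<Sum>j<n. c i j * u j)" if "i < n" for i
  proof -
    have "proj r (s * theta (w i)) = proj r (q * (\<Sum>j<n. c i j * w j))" using eq[OF that] by simp
    also have "proj r (s * theta (w i)) = s * theta (u i)"
      unfolding u_def by (simp only: proj_mult[OF s(1)] proj_theta)
    also have "proj r (q * (\<Sum>j<n. c i j * w j)) = q * (\<Sum>j<n. c i j * u j)"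
      unfolding u_def by (simp only: proj_mult[OF q(1)] proj_sum proj_mult[OF c])
    finally show ?thesis .
  qed
  define S where "S = {i. i < n \<and> u i \<noteq> 0}"
  have "u i0 $$ k \<noteq> 0" using i0 unfolding u_def by (simp add: proj_nth)
  then have "u i0 \<noteq> 0" by auto
  then have "i0 \<in> S" using i0 unfolding S_def by blast
  have finS: "finite S" unfolding S_def by simp
  define v where "v = Min ((\<lambda>i. fls_subdegree (u i)) ` S)"
  have "v \<in> (\<lambda>i. fls_subdegree (u i)) ` S" unfolding v_def
    using finS \<open>i0 \<in> S\<close> by (intro Min_in) auto
  then obtain i1 where i1: "i1 \<in> S" "fls_subdegree (u i1) = v" by blast
  have lbu: "lb (u j) v" if "j < n" for j
  proof (cases "u j = 0")
    case True then show ?thesis by (simp add: lb_def)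
  next
    case False
    then have "j \<in> S" using that S_def by auto
    then have "v \<le> fls_subdegree (u j)" unfolding v_def using finS by simp
    then show ?thesis unfolding lb_def by simp
  qed
  have i1n: "i1 < n" "u i1 \<noteq> 0" using i1 S_def by auto
  have ne: "u i1 $$ v \<noteq> 0" using i1(2) i1n(2) nth_fls_subdegree_nonzero by blast
  have "\<not> int r dvd v"
  proof
    assume "int r dvd v"
    then have "u i1 $$ v = 0" unfolding u_def by (simp add: proj_nth)
    then show False using ne by blast
  qed
  then have v0: "v \<noteq> 0" by auto
  have lbt: "lb (theta (u i1)) v" using lbu[OF i1n(1)] unfolding lb_def by (simp add: theta_nth)
  have "(s * theta (u i1)) $$ v = s $$ 0 * (of_int v * u i1 $$ v)"
    using nth_mult_lb[OF s(1) lbt] by (simp only: theta_nth)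
  also have "\<dots> \<noteq> 0" using s(2) char0[OF v0] ne by simp
  finally have L: "(s * theta (u i1)) $$ v \<noteq> 0" .
  have "lb (\<Sum>j<n. c i1 j * u j) v"
    by (intro lb_sum lb_mult[OF c] lbu)
  then have "(q * (\<Sum>j<n. c i1 j * u j)) $$ v = 0"
    using nth_mult_lb[OF q(1)] q(2) by simp
  then show False using L equ[OF i1n(1)] by simp
qed



lemma map_poly_hom_add:
  fixes h :: "'a::comm_ring_1 \<Rightarrow> 'b::comm_ring_1"
  assumes "h 0 = 0" "\<And>x y. h (x + y) = h x + h y"
  shows "map_poly h (p + q) = map_poly h p + map_poly h q"
  by (intro poly_eqI) (simp add: coeff_map_poly assms)

lemma map_poly_hom_diff:
  fixes h :: "'a::comm_ring_1 \<Rightarrow> 'b::comm_ring_1"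
  assumes "h 0 = 0" "\<And>x y. h (x + y) = h x + h y"
  shows "map_poly h (p - q) = map_poly h p - map_poly h q"
proof -
  have "map_poly h (p - q) + map_poly h q = map_poly h p"
    using map_poly_hom_add[OF assms, of "p - q" q] by simp
  then show ?thesis by (simp add: eq_diff_eq)
qed

lemma map_poly_hom_mult:
  fixes h :: "'a::comm_ring_1 \<Rightarrow> 'b::comm_ring_1"
  assumes h0: "h 0 = 0" and ha: "\<And>x y. h (x + y) = h x + h y"
    and hm: "\<And>x y. h (x * y) = h x * h y"
  shows "map_poly h (p * q) = map_poly h p * map_poly h q"
proof (induction p rule: pCons_induct)
  case 0 then show ?case by simp
next
  case (pCons a p)
  have "map_poly h (pCons a p * q) = map_poly h (smult a q + pCons 0 (p * q))" by simp
  also have "\<dots> = smult (h a) (map_poly h q) + pCons 0 (map_poly h p * map_poly h q)"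
    by (simp add: map_poly_hom_add[OF h0 ha] map_poly_smult[OF h0 hm] map_poly_pCons[of h, OF h0]
        pCons.IH h0)
  also have "\<dots> = map_poly h (pCons a p) * map_poly h q"
    by (simp add: map_poly_pCons[of h, OF h0])
  finally show ?case .
qed

lemma fc_add: "fls_const (x + y) = fls_const x + fls_const (y::'b::field)"
  by (simp add: fls_plus_const)
lemma fc_mult: "fls_const (x * y) = fls_const x * fls_const (y::'b::field)"
  by simp

definition zz :: "'b::field \<Rightarrow> nat \<Rightarrow> 'b fls" where "zz a r = fls_const a + fls_X ^ r"
definition G :: "'b::field \<Rightarrow> nat \<Rightarrow> 'b poly \<Rightarrow> 'b fls" where
  "G a r q = poly (map_poly fls_const q) (zz a r)"

lemma G_add: "G a r (p + q) = G a r p + G a r q"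
  unfolding G_def by (simp add: map_poly_hom_add[of fls_const, OF _ fc_add])
lemma G_diff: "G a r (p - q) = G a r p - G a r q"
  unfolding G_def by (simp add: map_poly_hom_diff[of fls_const, OF _ fc_add])
lemma G_mult: "G a r (p * q) = G a r p * G a r q"
  unfolding G_def by (simp add: map_poly_hom_mult[of fls_const, OF _ fc_add fc_mult])
lemma G_pCons: "G a r (pCons c q) = fls_const c + zz a r * G a r q"
  unfolding G_def by (simp add: map_poly_pCons)
lemma G_power: "G a r (p ^ k) = G a r p ^ k"
  by (induction k) (simp_all add: G_mult, simp add: G_def)

lemma Rp_add: "Rp r f \<Longrightarrow> Rp r g \<Longrightarrow> Rp r (f + g)"
  unfolding Rp_def by (metis add.right_neutral add_0 fls_plus_nth)
lemma Rp_mult: assumes "Rp r f" "Rp r g" shows "Rp r (f * g)"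
proof -
  have "lb g 0" using assms(2) unfolding Rp_def lb_def by (meson not_le)
  then have "lb (f * g) 0" using lb_mult[OF assms(1)] by blast
  moreover have "Qm r g" using assms(2) unfolding Rp_def Qm_def by blast
  then have "Qm r (f * g)" using Qm_mult[OF assms(1)] by blast
  ultimately show ?thesis unfolding Rp_def lb_def Qm_def by (meson not_le)
qed
lemma Rp_const: "Rp r (fls_const c)"
  unfolding Rp_def by simp
lemma Rp_zz: "Rp r (zz a r)"
  unfolding Rp_def zz_def by auto

definition Pz :: "'k::field alg_closure \<Rightarrow> nat \<Rightarrow> 'k poly \<Rightarrow> 'k alg_closure fls" where
  "Pz a r p = G a r (map_poly to_ac p)"

context fixes r :: nat assumes r: "0 < r"
begin

lemma G_props: "Rp r (G a r q) \<and> G a r q $$ 0 = poly q a"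
proof (induction q rule: pCons_induct)
  case 0 then show ?case by (simp add: G_def Rp_def)
next
  case (pCons c q)
  have lb: "lb (G a r q) 0" using pCons.IH unfolding Rp_def lb_def by (meson not_le)
  have "(zz a r * G a r q) $$ 0 = zz a r $$ 0 * G a r q $$ 0"
    by (rule nth_mult_lb[OF Rp_zz lb])
  then show ?case using pCons.IH r
    by (simp add: G_pCons Rp_add Rp_const Rp_mult Rp_zz) (simp add: zz_def)
qed

lemma G_lin: "G a r [:- a, 1:] = fls_X ^ r"
proof -
  have "G a r [:1:] = 1" using G_pCons[of a r 1 0] by (simp add: G_def)
  then show ?thesis using G_pCons[of a r "- a" "[:1:]"] by (simp add: zz_def fc_add[symmetric])
qed

lemma G_nonzero:
  assumes "q \<noteq> 0" shows "G a r q \<noteq> 0"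
proof -
  obtain q1 where q1: "q = [:- a, 1:] ^ order a q * q1" "\<not> [:- a, 1:] dvd q1"
    using order_decomp[OF assms] by blast
  have "poly q1 a \<noteq> 0" using q1(2) by (simp add: poly_eq_0_iff_dvd)
  then have "G a r q1 $$ 0 \<noteq> 0" using G_props by metis
  then have "G a r q1 \<noteq> 0" by auto
  moreover have "(fls_X ^ r :: 'a fls) \<noteq> 0" by (intro fls_nonzeroI[of _ "int r"]) simp
  ultimately show ?thesis
    by (subst q1(1)) (simp add: G_mult G_power G_lin)
qed


lemma Pz_alt: "poly (map_poly (fls_const \<circ> to_ac) p) (fls_const a + fls_X ^ r) = Pz a r p"
  unfolding Pz_def G_def zz_def by (simp add: map_poly_map_poly)

lemma ta_add: "map_poly to_ac (p + q) = map_poly to_ac p + map_poly to_ac q"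
  by (rule map_poly_hom_add) simp_all
lemma ta_diff: "map_poly to_ac (p - q) = map_poly to_ac p - map_poly to_ac q"
  by (rule map_poly_hom_diff) simp_all
lemma ta_mult: "map_poly to_ac (p * q) = map_poly to_ac p * map_poly to_ac q"
  by (rule map_poly_hom_mult) simp_all

lemma Pz_add: "Pz a r (p + q) = Pz a r p + Pz a r q" by (simp add: Pz_def ta_add G_add)
lemma Pz_diff: "Pz a r (p - q) = Pz a r p - Pz a r q" by (simp add: Pz_def ta_diff G_diff)
lemma Pz_mult: "Pz a r (p * q) = Pz a r p * Pz a r q" by (simp add: Pz_def ta_mult G_mult)
lemma Pz_1: "Pz a r 1 = 1" by (simp add: Pz_def G_def)
lemma Pz_0: "Pz a r 0 = 0" by (simp add: Pz_def G_def)
lemma Pz_nonzero: "p \<noteq> 0 \<Longrightarrow> Pz a r p \<noteq> 0"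
  unfolding Pz_def by (rule G_nonzero) (simp add: map_poly_eq_0_iff)
lemma Pz_props: "Rp r (Pz a r p) \<and> Pz a r p $$ 0 = poly (map_poly to_ac p) a"
  unfolding Pz_def by (rule G_props)

lemma rep_spec: "snd (rep g) \<noteq> 0 \<and> g = Fract (fst (rep g)) (snd (rep g))"
proof -
  obtain p q where "g = Fract p q" "q \<noteq> 0" by (cases g) blast
  then have "\<exists>pq. snd pq \<noteq> 0 \<and> g = Fract (fst pq) (snd pq)" by (intro exI[of _ "(p,q)"]) simp
  then show ?thesis unfolding rep_def by (rule someI_ex)
qed

lemma ser_rep: "ser_at a r g = Pz a r (fst (rep g)) / Pz a r (snd (rep g))"
  unfolding ser_at_def by (simp add: case_prod_unfold Pz_alt)

lemma ser_Fract:
  assumes "q \<noteq> 0" shows "ser_at a r (Fract p q) = Pz a r p / Pz a r q"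
proof -
  define p' where "p' = fst (rep (Fract p q))"
  define q' where "q' = snd (rep (Fract p q))"
  have q': "q' \<noteq> 0" "Fract p q = Fract p' q'" using rep_spec p'_def q'_def by metis+
  then have "p * q' = p' * q" using assms eq_fract(1) by metis
  then have "Pz a r p * Pz a r q' = Pz a r p' * Pz a r q" by (metis Pz_mult)
  then show ?thesis unfolding ser_rep p'_def[symmetric] q'_def[symmetric]
    using Pz_nonzero[OF assms] Pz_nonzero[OF q'(1)]
    by (simp add: frac_eq_eq)
qed

lemma ser_0: "ser_at a r 0 = 0"
  using ser_Fract[of 1 a 0] by (simp add: Zero_fract_def Pz_0)

lemma ser_add: "ser_at a r (x + y) = ser_at a r x + ser_at a r y"
proof -
  obtain p q where x: "x = Fract p q" "q \<noteq> 0" by (cases x) blast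
  obtain p' q' where y: "y = Fract p' q'" "q' \<noteq> 0" by (cases y) blast
  show ?thesis using x y Pz_nonzero[OF x(2), of a] Pz_nonzero[OF y(2), of a]
    by (simp add: ser_Fract Pz_add Pz_mult field_simps)
qed

lemma ser_mult: "ser_at a r (x * y) = ser_at a r x * ser_at a r y"
proof -
  obtain p q where x: "x = Fract p q" "q \<noteq> 0" by (cases x) blast
  obtain p' q' where y: "y = Fract p' q'" "q' \<noteq> 0" by (cases y) blast
  show ?thesis using x y Pz_nonzero[OF x(2), of a] Pz_nonzero[OF y(2), of a]
    by (simp add: ser_Fract Pz_add Pz_mult field_simps)
qed

lemma ser_to_fract: "ser_at a r (to_fract p) = Pz a r p"
  unfolding to_fract_def by (simp add: ser_Fract Pz_1)

lemma ser_nonzero: "x \<noteq> 0 \<Longrightarrow> ser_at a r x \<noteq> 0"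
  by (cases x) (auto simp: ser_Fract Pz_nonzero eq_fract Zero_fract_def)

end



lemma G_deriv: "fls_deriv (G a r q) = G a r (pderiv q) * fls_deriv (zz a r)"
proof (induction q rule: pCons_induct)
  case 0 then show ?case by (simp add: G_def)
next
  case (pCons c q)
  show ?case
    by (simp add: G_pCons pderiv_pCons G_add pCons.IH algebra_simps)
qed

lemma ta_pderiv: "map_poly to_ac (pderiv p) = pderiv (map_poly to_ac p)"
  by (intro poly_eqI) (simp add: coeff_pderiv coeff_map_poly)

lemma Pz_deriv: "fls_deriv (Pz a r p) = Pz a r (pderiv p) * fls_deriv (zz a r)"
  unfolding Pz_def by (simp add: G_deriv ta_pderiv)

lemma bezout_irr:
  fixes p q :: "'a::field poly"
  assumes irr: "irreducible p" and nd: "\<not> p dvd q"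
  shows "\<exists>u v. u * p + v * q = 1"
proof -
  define J where "J = {g. \<exists>u v. g = u * p + v * q}"
  have pJ: "p \<in> J" unfolding J_def by (intro CollectI exI[of _ 1] exI[of _ 0]) simp
  have qJ: "q \<in> J" unfolding J_def by (intro CollectI exI[of _ 0] exI[of _ 1]) simp
  have p0: "p \<noteq> 0" using irr by auto
  define d where "d = (LEAST d. \<exists>g\<in>J. g \<noteq> 0 \<and> degree g = d)"
  have "\<exists>g\<in>J. g \<noteq> 0 \<and> degree g = d"
    unfolding d_def by (rule LeastI_ex) (use pJ p0 in blast)
  then obtain g where g: "g \<in> J" "g \<noteq> 0" "degree g = d" by blast
  have mini: "d \<le> degree h" if "h \<in> J" "h \<noteq> 0" for h
    unfolding d_def by (rule Least_le) (use that in blast)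
  have modJ: "h mod g \<in> J" if hJ: "h \<in> J" for h
  proof -
    obtain u v where h: "h = u * p + v * q" using hJ unfolding J_def by blast
    obtain u' v' where g': "g = u' * p + v' * q" using g(1) unfolding J_def by blast
    have "h mod g = h - h div g * g" by (simp add: minus_div_mult_eq_mod)
    also have "\<dots> = (u - h div g * u') * p + (v - h div g * v') * q"
      by (simp add: h g' algebra_simps)
    finally show ?thesis unfolding J_def by blast
  qed
  have dvdJ: "g dvd h" if "h \<in> J" for h
  proof (rule ccontr)
    assume "\<not> g dvd h"
    then have "h mod g \<noteq> 0" by (simp add: mod_eq_0_iff_dvd)
    then have "degree (h mod g) < degree g" using degree_mod_less'[OF g(2)] by blast
    moreover have "d \<le> degree (h mod g)" using mini modJ[OF that] \<open>h mod g \<noteq> 0\<close> by blast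
    ultimately show False using g(3) by simp
  qed
  obtain k where k: "p = g * k" using dvdJ[OF pJ] by blast
  have "g dvd 1 \<or> k dvd 1" using irreducibleD[OF irr k] .
  moreover have "\<not> k dvd 1"
  proof
    assume "k dvd 1"
    then obtain k' where "1 = k * k'" by blast
    then have "g = p * k'" using k by (metis mult.assoc mult_1_right)
    then have "p dvd g" by simp
    then have "p dvd q" using dvdJ[OF qJ] by (rule dvd_trans)
    then show False using nd by blast
  qed
  ultimately have "g dvd 1" by blast
  then obtain k'' where k'': "1 = g * k''" by blast
  obtain u v where g': "g = u * p + v * q" using g(1) unfolding J_def by blast
  have "(k'' * u) * p + (k'' * v) * q = 1" using k'' g' by (simp add: algebra_simps)
  then show ?thesis by blast
qed

definition Phi :: "'k::field alg_closure \<Rightarrow> nat \<Rightarrow> 'k alg_closure fls \<Rightarrow> 'k poly fract poly \<Rightarrow> 'k alg_closure fls" where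
  "Phi a r Y f = poly (map_poly (ser_at a r) f) Y"

lemma fderiv_0: "fderiv 0 = 0"
proof -
  define p where "p = fst (rep (0::'a poly fract))"
  define q where "q = snd (rep (0::'a poly fract))"
  have q: "q \<noteq> 0" "0 = Fract p q" using rep_spec[OF zero_less_one] p_def q_def by metis+
  then have "p = 0" by (metis eq_fract(1) Zero_fract_def mult_1_right mult_zero_left zero_neq_one)
  have "fderiv 0 = Fract (pderiv p * q - p * pderiv q) (q ^ 2)"
    unfolding fderiv_def p_def q_def by (simp add: case_prod_unfold)
  also have "\<dots> = 0" using \<open>p = 0\<close> by (simp add: eq_fract(3) Zero_fract_def)
  finally show ?thesis .
qed

context fixes r :: nat assumes r: "0 < r"
begin

lemma ser_deriv: "fls_deriv (ser_at a r g) = ser_at a r (fderiv g) * fls_deriv (zz a r)"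
proof -
  define p where "p = fst (rep g)"
  define q where "q = snd (rep g)"
  have q: "q \<noteq> 0" using rep_spec[OF r] q_def by metis
  have fd: "fderiv g = Fract (pderiv p * q - p * pderiv q) (q ^ 2)"
    unfolding fderiv_def p_def q_def by (simp add: case_prod_unfold)
  define D where "D = fls_deriv (zz a r)"
  define F where "F = ser_at a r g"
  have F: "F = Pz a r p / Pz a r q" unfolding F_def p_def q_def by (rule ser_rep[OF r])
  have Pq: "Pz a r q \<noteq> 0" using Pz_nonzero[OF r q] .
  have "q ^ 2 \<noteq> 0" using q by simp
  then have sf: "ser_at a r (fderiv g) =
     (Pz a r (pderiv p) * Pz a r q - Pz a r p * Pz a r (pderiv q)) / (Pz a r q * Pz a r q)"
    unfolding fd by (simp add: ser_Fract[OF r] Pz_diff[OF r] Pz_mult[OF r] power2_eq_square)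
  have "F * Pz a r q = Pz a r p" using F Pq by simp
  then have "fls_deriv (F * Pz a r q) = fls_deriv (Pz a r p)" by simp
  then have "F * (Pz a r (pderiv q) * D) + fls_deriv F * Pz a r q = Pz a r (pderiv p) * D"
    by (simp add: Pz_deriv D_def)
  then have "fls_deriv F = (Pz a r (pderiv p) * D - F * (Pz a r (pderiv q) * D)) / Pz a r q"
    using Pq by (simp add: field_simps)
  then show ?thesis unfolding F_def[symmetric] D_def[symmetric] sf using Pq
    by (simp add: F field_simps)
qed

lemma Phi_add: "Phi a r Y (f + g) = Phi a r Y f + Phi a r Y g"
  unfolding Phi_def by (simp add: map_poly_hom_add[of "ser_at a r", OF ser_0[OF r] ser_add[OF r]])
lemma Phi_diff: "Phi a r Y (f - g) = Phi a r Y f - Phi a r Y g"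
  unfolding Phi_def by (simp add: map_poly_hom_diff[of "ser_at a r", OF ser_0[OF r] ser_add[OF r]])
lemma Phi_mult: "Phi a r Y (f * g) = Phi a r Y f * Phi a r Y g"
  unfolding Phi_def
  by (simp add: map_poly_hom_mult[of "ser_at a r", OF ser_0[OF r] ser_add[OF r] ser_mult[OF r]])
lemma Phi_smult: "Phi a r Y (smult c f) = ser_at a r c * Phi a r Y f"
  unfolding Phi_def by (simp add: map_poly_smult[of "ser_at a r", OF ser_0[OF r] ser_mult[OF r]])
lemma Phi_pCons: "Phi a r Y (pCons c f) = ser_at a r c + Y * Phi a r Y f"
  unfolding Phi_def by (simp add: map_poly_pCons[of "ser_at a r", OF ser_0[OF r]])
lemma Phi_0: "Phi a r Y 0 = 0" unfolding Phi_def by simp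
lemma Phi_1: "Phi a r Y 1 = 1"
proof -
  have "ser_at a r 1 = 1" using ser_to_fract[OF r, of a 1] by (simp add: Pz_1[OF r])
  then show ?thesis unfolding Phi_def by simp
qed
lemma Phi_sum: "Phi a r Y (\<Sum>j<(n::nat). F j) = (\<Sum>j<n. Phi a r Y (F j))"
  by (induction n) (simp_all add: Phi_0 Phi_add)
lemma Phi_dvd: "Phi a r Y mm = 0 \<Longrightarrow> mm dvd f \<Longrightarrow> Phi a r Y f = 0"
  by (auto simp: Phi_mult)
lemma Phi_mod: assumes "Phi a r Y mm = 0" shows "Phi a r Y (f mod mm) = Phi a r Y f"
proof -
  have "Phi a r Y f = Phi a r Y (f div mm * mm + f mod mm)" by (simp only: div_mult_mod_eq)
  also have "\<dots> = Phi a r Y (f mod mm)" using assms by (simp only: Phi_add Phi_mult mult_zero_right add_0)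
  finally show ?thesis by (rule sym)
qed

lemma Phi_deriv:
  "fls_deriv (Phi a r Y f) = Phi a r Y (map_poly fderiv f) * fls_deriv (zz a r)
     + Phi a r Y (pderiv f) * fls_deriv Y"
proof (induction f rule: pCons_induct)
  case 0 then show ?case by (simp add: Phi_def)
next
  case (pCons c f)
  have mp: "map_poly fderiv (pCons c f) = pCons (fderiv c) (map_poly fderiv f)"
    by (rule map_poly_pCons) (rule fderiv_0)
  show ?case
    by (simp add: mp Phi_pCons pderiv_pCons Phi_add ser_deriv pCons.IH ser_0[OF r] algebra_simps)
qed

end



lemma pderiv_props:
  fixes mm :: "'k::field_char_0 poly fract poly"
  assumes irr: "irreducible mm"
  shows "pderiv mm \<noteq> 0" "\<not> mm dvd pderiv mm"
proof -
  have m0: "mm \<noteq> 0" using irr by auto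
  have "\<not> is_unit mm" using irreducible_not_unit[OF irr] .
  then have dpos: "degree mm \<noteq> 0" using is_unit_iff_degree[OF m0] by blast
  define d where "d = degree mm"
  have c: "coeff (pderiv mm) (d - 1) = of_nat d * lead_coeff mm"
    using dpos by (simp add: coeff_pderiv d_def)
  have "(of_nat d :: 'k poly fract) = to_fract (of_nat d)"
    by (simp add: of_nat_fract to_fract_def)
  moreover have "(of_nat d :: 'k poly) \<noteq> 0" using dpos d_def by simp
  ultimately have "(of_nat d :: 'k poly fract) \<noteq> 0" by simp
  then have "coeff (pderiv mm) (d - 1) \<noteq> 0" using c m0 by simp
  then show pm: "pderiv mm \<noteq> 0" by auto
  have "degree (pderiv mm) \<le> d - 1"
    by (rule degree_le) (auto simp: coeff_pderiv d_def coeff_eq_0)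
  then have "degree (pderiv mm) < degree mm" using dpos d_def by linarith
  then show "\<not> mm dvd pderiv mm" using dvd_imp_degree_le[OF _ pm] by fastforce
qed

lemma aux_ring:
  fixes A B C D E :: "'a::comm_ring"
  assumes "A * B + C = 0" "C * D + A * E = 0"
  shows "A * (E - B * D) = 0"
proof -
  have "A * (E - B * D) = (C * D + A * E) - (A * B + C) * D" by (simp add: algebra_simps)
  then show ?thesis using assms by simp
qed

context fixes r :: nat assumes r: "0 < r"
begin

lemma key:
  fixes m :: "'k::field_char_0 poly poly"
  assumes irr: "irreducible (mK m)" and Y: "Phi a r Y (mK m) = 0"
  shows "fls_deriv (Phi a r Y f) = Phi a r Y (Aderiv m f) * fls_deriv (zz a r)"
proof -
  define mm where "mm = mK m"
  define pm where "pm = pderiv mm"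
  define mx where "mx = map_poly fderiv mm"
  define D where "D = fls_deriv (zz a r)"
  have "pm \<noteq> 0" "\<not> mm dvd pm" using pderiv_props irr mm_def pm_def by auto
  then obtain u v where uv: "u * mm + v * pm = 1" using bezout_irr irr mm_def by blast
  have "u * mm = 1 - v * pm" using uv by (simp add: eq_diff_eq)
  then have "mx * u * mm = mx * (1 - v * pm)" by (simp add: mult.assoc)
  then have "pm * (- v * mx) + mx = mx * u * mm" by (simp add: algebra_simps)
  then have "mm dvd pm * (- v * mx) + mx" by simp
  then have "\<exists>yd. mK m dvd (pderiv (mK m) * yd + map_poly fderiv (mK m))"
    unfolding mm_def pm_def mx_def by blast
  then have yd: "mm dvd pm * ydash m + mx"
    unfolding ydash_def mm_def pm_def mx_def by (rule someI_ex)
  have Ym: "Phi a r Y mm = 0" using Y mm_def by simp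
  have e1: "Phi a r Y pm * Phi a r Y (ydash m) + Phi a r Y mx = 0"
    using Phi_dvd[OF r Ym yd] by (simp add: Phi_add[OF r] Phi_mult[OF r])
  have "Phi a r Y u * Phi a r Y mm + Phi a r Y v * Phi a r Y pm = 1"
    using arg_cong[OF uv, of "Phi a r Y"] by (simp add: Phi_add[OF r] Phi_mult[OF r] Phi_1[OF r])
  then have "Phi a r Y v * Phi a r Y pm = 1" using Ym by simp
  then have pm0: "Phi a r Y pm \<noteq> 0" by auto
  have "0 = fls_deriv (Phi a r Y mm)" using Ym by simp
  also have "\<dots> = Phi a r Y mx * D + Phi a r Y pm * fls_deriv Y"
    unfolding mx_def pm_def D_def by (rule Phi_deriv[OF r])
  finally have e2: "Phi a r Y mx * D + Phi a r Y pm * fls_deriv Y = 0" by simp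
  have "Phi a r Y pm * (fls_deriv Y - Phi a r Y (ydash m) * D) = 0"
    using aux_ring[OF e1 e2] .
  then have dY: "fls_deriv Y = Phi a r Y (ydash m) * D" using pm0 by simp
  have "fls_deriv (Phi a r Y f) = Phi a r Y (map_poly fderiv f) * D + Phi a r Y (pderiv f) * fls_deriv Y"
    unfolding D_def by (rule Phi_deriv[OF r])
  also have "\<dots> = Phi a r Y (map_poly fderiv f + pderiv f * ydash m) * D"
    by (simp add: dY Phi_add[OF r] Phi_mult[OF r] algebra_simps)
  also have "\<dots> = Phi a r Y (Aderiv m f) * D"
    unfolding Aderiv_def using Phi_mod[OF r Ym] mm_def by simp
  finally show ?thesis unfolding D_def .
qed

end

theorem lemma5:
  fixes m :: "'k::field_char_0 poly poly"
    and n :: nat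
    and W :: "nat \<Rightarrow> 'k poly fract poly"
    and e :: "'k poly"
    and M :: "nat \<Rightarrow> nat \<Rightarrow> 'k poly"
    and a :: "'k alg_closure"
  assumes irr: "irreducible (mK m)"
    and n_def: "n = degree m"
    and basis: "is_A_basis m n W"
    and eWMW: "\<forall>i<n. mK m dvd
                 (smult (to_fract e) (Aderiv m (W i)) - (\<Sum>j<n. smult (to_fract (M i j)) (W j)))"
    and coprime: "\<forall>d::'k poly. d dvd e \<and> (\<forall>i<n. \<forall>j<n. d dvd M i j) \<longrightarrow> is_unit d"
    and bp: "\<exists>i<n. branch_point m (W i) a"
  shows "poly (map_poly to_ac e) a = 0"
proof (rule ccontr)
  assume ea: "poly (map_poly to_ac e) a \<noteq> 0"
  obtain i0 where i0: "i0 < n" "branch_point m (W i0) a" using bp by blast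
  then obtain r Y k where rY: "r \<ge> 1" "poly (map_poly (ser_at a r) (mK m)) Y = 0"
    "fls_nth (poly (map_poly (ser_at a r) (W i0)) Y) k \<noteq> 0" "\<not> int r dvd k"
    unfolding branch_point_def by blast
  have r: "0 < r" using rY by simp
  define w where "w i = Phi a r Y (W i)" for i
  define s where "s = Pz a r e"
  define c where "c i j = Pz a r (M i j)" for i j
  define q where "q = theta (zz a r)"
  have Ym: "Phi a r Y (mK m) = 0" using rY(2) unfolding Phi_def .
  have char0: "(of_int v :: 'k alg_closure) \<noteq> 0" if "v \<noteq> 0" for v :: int
  proof -
    have "(of_int v :: 'k alg_closure) = to_ac (of_int v)" by simp
    moreover have "(of_int v :: 'k) \<noteq> 0" using that by simp
    ultimately show ?thesis by simp
  qed
  have s: "Rp r s" "s $$ 0 \<noteq> 0" using Pz_props[OF r, of a e] ea unfolding s_def by auto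
  have c: "Rp r (c i j)" for i j using Pz_props[OF r] unfolding c_def by blast
  have q: "Rp r q" "q $$ 0 = 0"
    using Rp_zz[of r a] unfolding q_def Rp_def by (auto simp: theta_nth)
  have eq: "s * theta (w i) = q * (\<Sum>j<n. c i j * w j)" if "i < n" for i
  proof -
    have "Phi a r Y (smult (to_fract e) (Aderiv m (W i)) - (\<Sum>j<n. smult (to_fract (M i j)) (W j))) = 0"
      using eWMW that Phi_dvd[OF r Ym] by blast
    then have E: "s * Phi a r Y (Aderiv m (W i)) = (\<Sum>j<n. c i j * w j)"
      by (simp add: Phi_diff[OF r] Phi_smult[OF r] Phi_sum[OF r] ser_to_fract[OF r] s_def c_def w_def)
    have "theta (w i) = fls_X * (Phi a r Y (Aderiv m (W i)) * fls_deriv (zz a r))"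
      unfolding theta_def w_def using key[OF r irr Ym] by simp
    then have "s * theta (w i) = q * (s * Phi a r Y (Aderiv m (W i)))"
      unfolding q_def theta_def by (simp add: algebra_simps)
    then show ?thesis using E by simp
  qed
  show False
    using final_contra[of r s c q n w i0 k, OF char0 s c q eq i0(1)] rY(3,4)
    unfolding w_def Phi_def by blast
qed

end
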